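(* Let $n\ge 1$ and $u,v\in\mathsf{Tr}(n)$. Then $v$ covers $u$ in the poset $(\mathsf{Tr}(n),\preccurlyeq)$ if and only if $u\preccurlyeq v$, there is exactly one index $i$ with $u_i<v_i$, and every $w\in\mathsf{Tr}(n)$ with $u\preccurlyeq w\preccurlyeq v$ satisfies $w=u$ or $w=v$. In particular, two triwords in a covering relation differ in exactly one letter.
   Context: A triword of size $n$ is a word $u=u_1\cdots u_n$ with $u_i\in\{0,1,2\}$, $u_1\ne 2$, and such that $u_i=0$ implies $u_j\neq 1$ for all $j>i$; $\mathsf{Tr}(n)$ denotes their set. The order $\preccurlyeq$ on $\mathsf{Tr}(n)$ is the componentwise order: $u\preccurlyeq v$ iff $u_i\le v_i$ for all $i\in[n]$. *)

theory Defs
  imports Main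
begin

text \<open>Words u = u_1 ... u_n are represented as lists of naturals of length n;
  the letter u_i is u ! (i-1), indices range over {0..<n}.\<close>

definition triword :: "nat \<Rightarrow> nat list \<Rightarrow> bool" where
  "triword n u \<longleftrightarrow> length u = n \<and> (\<forall>i<n. u ! i \<in> {0,1,2})
     \<and> (n \<ge> 1 \<longrightarrow> u ! 0 \<noteq> 2)
     \<and> (\<forall>i<n. \<forall>j<n. i < j \<and> u ! i = 0 \<longrightarrow> u ! j \<noteq> 1)"

definition Tr :: "nat \<Rightarrow> nat list set" where
  "Tr n = {u. triword n u}"

definition tr_le :: "nat \<Rightarrow> nat list \<Rightarrow> nat list \<Rightarrow> bool" where
  "tr_le n u v \<longleftrightarrow> (\<forall>i<n. u ! i \<le> v ! i)"

definition tr_covers :: "nat \<Rightarrow> nat list \<Rightarrow> nat list \<Rightarrow> bool" where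
  "tr_covers n u v \<longleftrightarrow> u \<in> Tr n \<and> v \<in> Tr n \<and> tr_le n u v \<and> u \<noteq> v
     \<and> \<not> (\<exists>w\<in>Tr n. tr_le n u w \<and> tr_le n w v \<and> w \<noteq> u \<and> w \<noteq> v)"

end

theory Submission
  imports Defs
begin

lemma key:
  assumes u: "u \<in> Tr n" and v: "v \<in> Tr n" and le: "tr_le n u v"
    and a: "a < n" "u ! a < v ! a" and b: "b < n" "u ! b < v ! b" and ab: "a \<noteq> b"
  shows "\<exists>w\<in>Tr n. tr_le n u w \<and> tr_le n w v \<and> w \<noteq> u \<and> w \<noteq> v"
proof -
  define D where "D = {i. i < n \<and> u ! i < v ! i}"
  have fD: "finite D" unfolding D_def by auto
  have "a \<in> D" "b \<in> D" using a b by (auto simp: D_def)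
  define k where "k = Max D"
  have kD: "k \<in> D" unfolding k_def using fD \<open>a \<in> D\<close> by (intro Max_in) auto
  have kmax: "\<And>j. j \<in> D \<Longrightarrow> j \<le> k" unfolding k_def using fD by auto
  have kn: "k < n" and uk: "u ! k < v ! k" using kD by (auto simp: D_def)
  obtain c where c: "c \<in> D" "c \<noteq> k" using \<open>a \<in> D\<close> \<open>b \<in> D\<close> ab by blast
  have cn: "c < n" "u ! c < v ! c" using c by (auto simp: D_def)
  have tu: "triword n u" and tv: "triword n v" using u v by (auto simp: Tr_def)
  have lu: "length u = n" and lv: "length v = n" using tu tv by (auto simp: triword_def)
  have after: "\<And>j. k < j \<Longrightarrow> j < n \<Longrightarrow> v ! j = u ! j"
  proof -
    fix j assume "k < j" "j < n"
    hence "j \<notin> D" using kmax by force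
    thus "v ! j = u ! j" using le \<open>j < n\<close> by (auto simp: D_def tr_le_def)
  qed
  define w where "w = v[k := u ! k]"
  have wi: "\<And>i. w ! i = (if i = k then u ! k else v ! i)" unfolding w_def using kn lv by auto
  have lw: "length w = n" unfolding w_def using lv by simp
  have "triword n w"
    unfolding triword_def
  proof (intro conjI allI impI)
    show "length w = n" by fact
  next
    fix i assume "i < n" thus "w ! i \<in> {0,1,2}" using tu tv kn by (auto simp: wi triword_def)
  next
    assume "1 \<le> n" thus "w ! 0 \<noteq> 2" using tu tv by (auto simp: wi triword_def)
  next
    fix i j assume ij: "i < n" "j < n" "i < j \<and> w ! i = 0"
    show "w ! j \<noteq> 1"
    proof (cases "i = k")
      case True
      hence "u ! i = 0" using ij wi by auto
      moreover have "\<forall>i<n. \<forall>j<n. i < j \<and> u ! i = 0 \<longrightarrow> u ! j \<noteq> 1"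
        using tu unfolding triword_def by blast
      ultimately have "u ! j \<noteq> 1" using ij by blast
      thus ?thesis using True ij after by (auto simp: wi)
    next
      case False
      hence vi: "v ! i = 0" using ij wi by auto
      show ?thesis
      proof (cases "j = k")
        case True
        have "u ! i \<le> v ! i" using le ij by (auto simp: tr_le_def)
        hence "u ! i = 0" using vi by simp
        moreover have "\<forall>i<n. \<forall>j<n. i < j \<and> u ! i = 0 \<longrightarrow> u ! j \<noteq> 1"
          using tu unfolding triword_def by blast
        ultimately have "u ! k \<noteq> 1" using ij True by blast
        thus ?thesis using True by (simp add: wi)
      next
        case False
        moreover have "\<forall>i<n. \<forall>j<n. i < j \<and> v ! i = 0 \<longrightarrow> v ! j \<noteq> 1"
          using tv unfolding triword_def by blast
        ultimately have "v ! j \<noteq> 1" using vi ij by blast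
        thus ?thesis using False by (simp add: wi)
      qed
    qed
  qed
  hence wT: "w \<in> Tr n" by (simp add: Tr_def)
  have "tr_le n u w" using le by (auto simp: tr_le_def wi)
  moreover have "tr_le n w v" using le uk by (auto simp: tr_le_def wi)
  moreover have "w \<noteq> u" using cn c(2) wi by (metis less_irrefl)
  moreover have "w \<noteq> v" using uk wi by (metis less_irrefl)
  ultimately show ?thesis using wT by blast
qed

theorem proposition1p3:
  fixes n :: nat and u v :: "nat list"
  assumes "n \<ge> 1" and "u \<in> Tr n" and "v \<in> Tr n"
  shows "(tr_covers n u v \<longleftrightarrow>
            tr_le n u v \<and> (\<exists>!i. i < n \<and> u ! i < v ! i)
            \<and> (\<forall>w\<in>Tr n. tr_le n u w \<and> tr_le n w v \<longrightarrow> w = u \<or> w = v))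
         \<and> (tr_covers n u v \<longrightarrow> (\<exists>!i. i < n \<and> u ! i \<noteq> v ! i))"
proof -
  have lu: "length u = n" and lv: "length v = n" using assms by (auto simp: Tr_def triword_def)
  have A: "(\<exists>!i. i < n \<and> u ! i < v ! i)" if cov: "tr_covers n u v"
  proof -
    have le: "tr_le n u v" and ne: "u \<noteq> v" using cov by (auto simp: tr_covers_def)
    have "\<exists>i<n. u ! i \<noteq> v ! i" using ne lu lv by (metis nth_equalityI)
    then obtain i where i: "i < n" "u ! i < v ! i" using le by (force simp: tr_le_def)
    show ?thesis
    proof (rule ex1I[of _ i])
      show "i < n \<and> u ! i < v ! i" using i by simp
    next
      fix j assume j: "j < n \<and> u ! j < v ! j"
      show "j = i"
      proof (rule ccontr)
        assume "j \<noteq> i"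
        from key[OF assms(2,3) le i(1,2) _ _ this[symmetric]] j
        show False using cov by (auto simp: tr_covers_def)
      qed
    qed
  qed
  have B: "tr_covers n u v" if h: "tr_le n u v \<and> (\<exists>!i. i < n \<and> u ! i < v ! i)
            \<and> (\<forall>w\<in>Tr n. tr_le n u w \<and> tr_le n w v \<longrightarrow> w = u \<or> w = v)"
  proof -
    have "u \<noteq> v" using h by auto
    thus ?thesis using h assms by (auto simp: tr_covers_def)
  qed
  have C: "(\<exists>!i. i < n \<and> u ! i \<noteq> v ! i)" if cov: "tr_covers n u v"
  proof -
    have le: "tr_le n u v" using cov by (auto simp: tr_covers_def)
    have "\<And>i. i < n \<Longrightarrow> (u ! i \<noteq> v ! i) = (u ! i < v ! i)"
      using le by (auto simp: tr_le_def)
    hence "(\<lambda>i. i < n \<and> u ! i \<noteq> v ! i) = (\<lambda>i. i < n \<and> u ! i < v ! i)" by auto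
    thus ?thesis using A[OF cov] by simp
  qed
  have D: "tr_covers n u v \<Longrightarrow> (\<forall>w\<in>Tr n. tr_le n u w \<and> tr_le n w v \<longrightarrow> w = u \<or> w = v)"
    by (auto simp: tr_covers_def)
  have E: "tr_covers n u v \<Longrightarrow> tr_le n u v" by (simp add: tr_covers_def)
  show ?thesis using A B C D E by blast
qed

end
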